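(* Let $\mathcal{C}=(V,\mathcal{R})$ be a coherent configuration with fibers $X,Y$ such that $m=|X|=|Y|$ is a prime, $|\mathcal{R}_X|>2$ and $|\mathcal{R}_{X,Y}|>1$. If $S,T\in\mathcal{R}_{X,Y}$ and $R\in\mathcal{R}$ satisfy $ST^t=\{R\}$, then $c_{RR^t}^{R_1}\ge d_T$ for each $R_1\in SS^t$, and $c_{R^tR}^{R_2}\ge d_S$ for each $R_2\in TT^t$.
   Context: A coherent configuration is a pair $\mathcal{C}=(V,\mathcal{R})$ where $V$ is a finite set and $\mathcal{R}$ is a partition of $V\times V$ into nonempty sets such that: (1) the diagonal $\Delta_V$ is a union of members of $\mathcal{R}$; (2) for each $R\in\mathcal{R}$ its transpose $R^t=\{(u,v)\mid (v,u)\in R\}$ belongs to $\mathcal{R}$; (3) for all $R,S,T\in\mathcal{R}$ there is a constant $c_{RS}^T$ with $c_{RS}^T=|R(u)\cap S^t(v)|$ for all $(u,v)\in T$, where $T(w)=\{z\in V\mid (w,z)\in T\}$. A subset $X\subseteq V$ is a fiber if $\Delta_X\in\mathcal{R}$. For fibers $X,Y$, $\mathcal{R}_{X,Y}=\{R\in\mathcal{R}\mid R\subseteq X\times Y\}$, $\mathcal{R}_X=\mathcal{R}_{X,X}$, and for $R\in\mathcal{R}_{X,Y}$, $d_R=c_{RR^t}^{\Delta_X}=|R(x)|$ for any $x\in X$. Complex product: for $A,B\in\mathcal{R}$, $AB=\{R\in\mathcal{R}\mid c_{AB}^R>0\}$. *)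

theory Defs
  imports "HOL-Computational_Algebra.Primes"
begin

definition coherent_configuration :: "'a set \<Rightarrow> ('a \<times> 'a) set set \<Rightarrow> bool" where
  "coherent_configuration V Rel \<longleftrightarrow>
     finite V \<and>
     (\<forall>S\<in>Rel. S \<noteq> {}) \<and>
     \<Union>Rel = V \<times> V \<and>
     (\<forall>S\<in>Rel. \<forall>T\<in>Rel. S \<noteq> T \<longrightarrow> S \<inter> T = {}) \<and>
     (\<exists>D\<subseteq>Rel. \<Union>D = Id_on V) \<and>
     (\<forall>S\<in>Rel. converse S \<in> Rel) \<and>
     (\<forall>S\<in>Rel. \<forall>T\<in>Rel. \<forall>U\<in>Rel. \<exists>c::nat. \<forall>(u,v)\<in>U.
         card (S `` {u} \<inter> (converse T) `` {v}) = c)"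

(* intersection number c_{S T}^U = |S(u) \<inter> T^t(v)| for (u,v) \<in> U (well defined by coherence) *)
definition cnum :: "('a \<times> 'a) set \<Rightarrow> ('a \<times> 'a) set \<Rightarrow> ('a \<times> 'a) set \<Rightarrow> nat" where
  "cnum S T U = (let p = (SOME p. p \<in> U) in card (S `` {fst p} \<inter> (converse T) `` {snd p}))"

definition fiber :: "('a \<times> 'a) set set \<Rightarrow> 'a set \<Rightarrow> bool" where
  "fiber Rel X \<longleftrightarrow> Id_on X \<in> Rel"

definition rels :: "('a \<times> 'a) set set \<Rightarrow> 'a set \<Rightarrow> 'a set \<Rightarrow> ('a \<times> 'a) set set" where
  "rels Rel X Y = {S \<in> Rel. S \<subseteq> X \<times> Y}"

definition deg :: "('a \<times> 'a) set \<Rightarrow> 'a set \<Rightarrow> nat" where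
  "deg S X = cnum S (converse S) (Id_on X)"

definition cprod :: "('a \<times> 'a) set set \<Rightarrow> ('a \<times> 'a) set \<Rightarrow> ('a \<times> 'a) set \<Rightarrow> ('a \<times> 'a) set set" where
  "cprod Rel A B = {U \<in> Rel. cnum A B U > 0}"

end

theory Submission
  imports Defs
begin

lemma cc_fin: "coherent_configuration V Rel \<Longrightarrow> finite V"
  by (simp add: coherent_configuration_def)

lemma cc_union: "coherent_configuration V Rel \<Longrightarrow> \<Union>Rel = V \<times> V"
  by (simp add: coherent_configuration_def)

lemma cc_sub: "coherent_configuration V Rel \<Longrightarrow> A \<in> Rel \<Longrightarrow> A \<subseteq> V \<times> V"
  using cc_union by (metis Union_upper)

lemma cc_conv: "coherent_configuration V Rel \<Longrightarrow> A \<in> Rel \<Longrightarrow> converse A \<in> Rel"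
  by (simp add: coherent_configuration_def)

lemma cc_cover: "coherent_configuration V Rel \<Longrightarrow> p \<in> V \<times> V \<Longrightarrow> \<exists>U\<in>Rel. p \<in> U"
  using cc_union by (metis UnionE)

lemma cc_const:
  assumes "coherent_configuration V Rel" "A \<in> Rel" "B \<in> Rel" "U \<in> Rel"
    "(u,v) \<in> U" "(u',v') \<in> U"
  shows "card (A `` {u} \<inter> converse B `` {v}) = card (A `` {u'} \<inter> converse B `` {v'})"
proof -
  from assms(1) have "\<forall>S\<in>Rel. \<forall>T\<in>Rel. \<forall>U\<in>Rel. \<exists>c::nat. \<forall>(u,v)\<in>U.
         card (S `` {u} \<inter> (converse T) `` {v}) = c"
    by (simp add: coherent_configuration_def)
  then obtain c where "\<forall>(u,v)\<in>U. card (A `` {u} \<inter> (converse B) `` {v}) = c"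
    using assms(2-4) by blast
  then have "card (A `` {u} \<inter> (converse B) `` {v}) = c"
    "card (A `` {u'} \<inter> (converse B) `` {v'}) = c"
    using assms(5,6) by fastforce+
  then show ?thesis by simp
qed

lemma cnum_at:
  assumes "coherent_configuration V Rel" "A \<in> Rel" "B \<in> Rel" "U \<in> Rel" "(u,v) \<in> U"
  shows "cnum A B U = card (A `` {u} \<inter> converse B `` {v})"
proof -
  have "(SOME p. p \<in> U) \<in> U" using assms(5) by (rule someI)
  then have "(fst (SOME p. p \<in> U), snd (SOME p. p \<in> U)) \<in> U" by simp
  from cc_const[OF assms(1-4) this assms(5)] show ?thesis
    unfolding cnum_def Let_def by simp
qed

lemma regular:
  assumes "coherent_configuration V Rel" "A \<in> Rel" "fiber Rel X" "x \<in> X" "x' \<in> X"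
  shows "card (A `` {x}) = card (A `` {x'})"
proof -
  have "converse A \<in> Rel" using cc_conv assms by blast
  from cc_const[OF assms(1,2) this, of "Id_on X" x x x' x'] assms
  show ?thesis unfolding fiber_def by auto
qed

lemma deg_eq:
  assumes "coherent_configuration V Rel" "A \<in> Rel" "fiber Rel X" "x \<in> X"
  shows "deg A X = card (A `` {x})"
proof -
  have "converse A \<in> Rel" using cc_conv assms by blast
  have "Id_on X \<in> Rel" using assms(3) unfolding fiber_def .
  have "deg A X = card (A `` {x} \<inter> converse (converse A) `` {x})"
    unfolding deg_def by (rule cnum_at[OF assms(1,2) \<open>converse A \<in> Rel\<close> \<open>Id_on X \<in> Rel\<close>])
      (use assms(4) in auto)
  then show ?thesis by simp
qed

lemma fiber_sub: "coherent_configuration V Rel \<Longrightarrow> fiber Rel X \<Longrightarrow> X \<subseteq> V"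
  unfolding fiber_def using cc_sub by (metis Id_onI mem_Sigma_iff subsetD subsetI)

lemma card_rel:
  assumes "finite X" "A \<subseteq> X \<times> Y" "finite Y" "\<And>x. x \<in> X \<Longrightarrow> card (A `` {x}) = d"
  shows "card A = card X * d"
proof -
  have "A = Sigma X (\<lambda>x. A `` {x})" using assms(2) by auto
  then have "card A = (\<Sum>x\<in>X. card (A `` {x}))"
    using assms by (metis card_SigmaI finite_Image finite_SigmaI finite_subset)
  also have "\<dots> = card X * d" using assms(4) by simp
  finally show ?thesis .
qed

lemma deg_conv:
  assumes "coherent_configuration V Rel" "fiber Rel X" "fiber Rel Y" "card X = card Y"
    "card X > 0" "A \<in> rels Rel X Y" "z \<in> Y"
  shows "card (converse A `` {z}) = deg A X"
proof -
  have AR: "A \<in> Rel" and AXY: "A \<subseteq> X \<times> Y" using assms(6) unfolding rels_def by auto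
  have cAR: "converse A \<in> Rel" using cc_conv assms(1) AR by blast
  have fX: "finite X" and fY: "finite Y"
    using fiber_sub[OF assms(1)] assms(2,3) cc_fin[OF assms(1)] finite_subset by blast+
  obtain x where x: "x \<in> X" using assms(5) by (metis card.empty ex_in_conv less_irrefl)
  have "card A = card X * deg A X"
    by (rule card_rel[OF fX AXY fY]) (metis deg_eq[OF assms(1) AR assms(2)])
  moreover have "card (converse A) = card Y * card (converse A `` {z})"
    by (rule card_rel[OF fY _ fX]) (use AXY regular[OF assms(1) cAR assms(3) _ assms(7)] in auto)
  moreover have "card (converse A) = card A" by (rule card_inverse)
  ultimately show ?thesis using assms(4,5) by simp
qed

lemma key:
  assumes cc: "coherent_configuration V Rel" and fX: "fiber Rel X" and fY: "fiber Rel Y"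
    and S: "S \<in> rels Rel X Y" and T: "T \<in> rels Rel X Y" and R: "R \<in> Rel"
    and prod: "cprod Rel S (converse T) = {R}"
    and xz: "(x,z) \<in> S" and wz: "(w,z) \<in> T"
  shows "(x,w) \<in> R"
proof -
  have SR: "S \<in> Rel" and TR: "T \<in> Rel" and SXY: "S \<subseteq> X \<times> Y" and TXY: "T \<subseteq> X \<times> Y"
    using S T unfolding rels_def by auto
  have cT: "converse T \<in> Rel" using cc_conv cc TR by blast
  have "X \<subseteq> V" using fiber_sub cc fX by blast
  then have "(x,w) \<in> V \<times> V" using xz wz SXY TXY by auto
  then obtain U where U: "U \<in> Rel" "(x,w) \<in> U" using cc_cover[OF cc] by blast
  have "cnum S (converse T) U = card (S `` {x} \<inter> converse (converse T) `` {w})"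
    by (rule cnum_at[OF cc SR cT U])
  moreover have "finite (S `` {x})"
    using cc_sub[OF cc SR] cc_fin[OF cc] by (meson finite_Image finite_SigmaI finite_subset)
  moreover have "z \<in> S `` {x} \<inter> converse (converse T) `` {w}" using xz wz by auto
  ultimately have "cnum S (converse T) U > 0"
    by (metis card_gt_0_iff empty_iff finite_Int)
  then have "U \<in> cprod Rel S (converse T)" using U unfolding cprod_def by auto
  then show ?thesis using prod U by auto
qed

theorem lemma3p6:
  fixes V :: "'a set" and Rel :: "('a \<times> 'a) set set"
    and X Y :: "'a set" and S T R :: "('a \<times> 'a) set"
  assumes "coherent_configuration V Rel"
    and "fiber Rel X" and "fiber Rel Y"
    and "card X = card Y" and "prime (card X)"
    and "card (rels Rel X X) > 2" and "card (rels Rel X Y) > 1"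
    and "S \<in> rels Rel X Y" and "T \<in> rels Rel X Y" and "R \<in> Rel"
    and "cprod Rel S (converse T) = {R}"
  shows "(\<forall>R1\<in>cprod Rel S (converse S). cnum R (converse R) R1 \<ge> deg T X)
       \<and> (\<forall>R2\<in>cprod Rel T (converse T). cnum (converse R) R R2 \<ge> deg S X)"
proof -
  note cc = assms(1)
  have pos: "card X > 0" using assms(5) prime_gt_0_nat by blast
  have SXY: "S \<subseteq> X \<times> Y" and TXY: "T \<subseteq> X \<times> Y" using assms(8,9) unfolding rels_def by auto
  have finR: "\<And>a. finite (R `` {a})" "\<And>a. finite (converse R `` {a})"
    using cc_sub[OF cc assms(10)] cc_fin[OF cc]
    by (meson finite_Image finite_SigmaI finite_subset finite_converse)+
  have K: "\<And>x z w. (x,z) \<in> S \<Longrightarrow> (w,z) \<in> T \<Longrightarrow> (x,w) \<in> R"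
    using key[OF cc assms(2,3,8,9,10,11)] by blast
  show ?thesis
  proof (intro conjI ballI)
    fix R1 assume "R1 \<in> cprod Rel S (converse S)"
    then have "cnum S (converse S) R1 > 0" unfolding cprod_def by auto
    then obtain a b where ab: "a = fst (SOME p. p \<in> R1)" "b = snd (SOME p. p \<in> R1)"
      and "card (S `` {a} \<inter> converse (converse S) `` {b}) > 0"
      unfolding cnum_def Let_def by auto
    then obtain z where z: "(a,z) \<in> S" "(b,z) \<in> S" by (auto simp: card_gt_0_iff)
    have zY: "z \<in> Y" using z SXY by auto
    have "converse T `` {z} \<subseteq> R `` {a} \<inter> converse (converse R) `` {b}"
      using K z by auto
    then have "card (converse T `` {z}) \<le> card (R `` {a} \<inter> converse (converse R) `` {b})"
      by (intro card_mono) (use finR in auto)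
    then show "deg T X \<le> cnum R (converse R) R1"
      using deg_conv[OF cc assms(2,3,4) pos assms(9) zY] ab unfolding cnum_def Let_def by simp
  next
    fix R2 assume "R2 \<in> cprod Rel T (converse T)"
    then have "cnum T (converse T) R2 > 0" unfolding cprod_def by auto
    then obtain a b where ab: "a = fst (SOME p. p \<in> R2)" "b = snd (SOME p. p \<in> R2)"
      and "card (T `` {a} \<inter> converse (converse T) `` {b}) > 0"
      unfolding cnum_def Let_def by auto
    then obtain z where z: "(a,z) \<in> T" "(b,z) \<in> T" by (auto simp: card_gt_0_iff)
    have zY: "z \<in> Y" using z TXY by auto
    have "converse S `` {z} \<subseteq> converse R `` {a} \<inter> converse R `` {b}"
      using K z by auto
    then have "card (converse S `` {z}) \<le> card (converse R `` {a} \<inter> converse R `` {b})"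
      by (intro card_mono) (use finR in auto)
    then show "deg S X \<le> cnum (converse R) R R2"
      using deg_conv[OF cc assms(2,3,4) pos assms(8) zY] ab unfolding cnum_def Let_def by simp
  qed
qed

end
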